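(* Let $n,m\ge1$ and identify $n$-bit strings with elements of $\mathbb{F}_{2^n}$, with addition $\oplus$ (bitwise XOR) and field multiplication $*$; for a bit $d$ and $b\in\mathbb{F}_{2^n}$ let $d\cdot b$ be $0$ if $d=0$ and $b$ if $d=1$. Let $B_1,\dots,B_m$ be independent uniformly random elements of $\mathbb{F}_{2^n}$ (honest Bob's challenges), and let $R_A$ be a random variable on a finite set, independent of $(B_1,\dots,B_m)$. A classical cheating strategy of Alice is a collection of deterministic functions with values in $\mathbb{F}_{2^n}$ giving her messages $Y_1=f_1(R_A,B_1)$; for $2\le k\le m$, $Y_k^{(d)}=f_k(R_A,B_1,\dots,B_{k-2},B_k,d)$; and $Y_{m+1}^{(d)}=f_{m+1}(R_A,B_1,\dots,B_{m-1},d)$, where $d\in\{0,1\}$ is the bit she attempts to unveil. Let $H_d$ be the event $$Y^{(d)}_{m+1}=\bigoplus_{j=1}^{m}\Big(\prod_{i=j+1}^{m}B_i\Big)*Y^{(d)}_j\ \oplus\ d\cdot\prod_{i=1}^{m}B_i,$$ where $Y^{(d)}_1:=Y_1$, products are taken with $*$ and the empty product is $1$, and let $p_d=\Pr[H_d]$. Then for every such strategy, $p_0+p_1\le1+\omega_m$, where $\omega_m$ is the optimal winning probability of the $m$-player multiplication game over $\mathbb{F}_{2^n}$ defined below; i.e. the $(m+1)$-round protocol is $\varepsilon$-binding with $\varepsilon=\omega_m$.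
   Context: Multiplication game: for $r\ge1$ and a finite field $\mathbb{F}_q$, inputs $X_1,\dots,X_r$ are independent uniform on $\mathbb{F}_q$; player $k$ sees all inputs except $X_k$ and outputs $f_k(X_{[r]\setminus\{k\}})$ for some function $f_k:\mathbb{F}_q^{r-1}\to\mathbb{F}_q$; the game is won iff $\prod_{k=1}^rX_k=\sum_{k=1}^rf_k(X_{[r]\setminus\{k\}})$; $\omega_r$ is the maximum winning probability over all choices of $f_1,\dots,f_r$. The protocol: Alice's agents share uniform secrets $a_1,\dots,a_m$; in round 1 Bob sends $b_1$ and Alice returns $y_1=d\cdot b_1\oplus a_1$; in rounds $2\le k\le m$ Bob sends $b_k$ and Alice returns $y_k=(b_k*a_{k-1})\oplus a_k$; in round $m+1$ Alice sends $d$ and $y_{m+1}=a_m$; Bob accepts iff the relation defining $H_d$ holds. Consecutive rounds are space-like separated, so Alice's round-$k$ message cannot depend on $b_{k-1}$, and her round-1 message cannot depend on $d$; this is what the dependencies of the $f_k$ encode. $\varepsilon$-binding means $p_0+p_1\le1+\varepsilon$ for all cheating strategies. *)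

theory Defs
  imports "HOL-Probability.Probability"
begin

text \<open>Player k outputs f k applied to the input with coordinate k erased
  (overwritten by 0), so player k's output cannot depend on X_k but may depend
  arbitrarily on all other inputs.\<close>

definition mult_game_inputs :: "nat \<Rightarrow> (nat \<Rightarrow> 'f::{field,finite}) set" where
  "mult_game_inputs r = PiE {1..r} (\<lambda>_. UNIV)"

definition mult_game_win_prob ::
  "nat \<Rightarrow> (nat \<Rightarrow> (nat \<Rightarrow> 'f::{field,finite}) \<Rightarrow> 'f) \<Rightarrow> real" where
  "mult_game_win_prob r f =
     real (card {x \<in> mult_game_inputs r.
                  (\<Prod>k\<in>{1..r}. x k) = (\<Sum>k\<in>{1..r}. f k (x(k := 0)))})
     / real (card (mult_game_inputs r :: (nat \<Rightarrow> 'f) set))"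

definition mult_game_value :: "'f::{field,finite} itself \<Rightarrow> nat \<Rightarrow> real" where
  "mult_game_value _ r =
     (SUP f :: nat \<Rightarrow> (nat \<Rightarrow> 'f) \<Rightarrow> 'f. mult_game_win_prob r f)"

text \<open>Alice's message in
  round k for the unveiled bit d (True = 1). f1 gives Y_1 = f1(R_A,B_1);
  f k gives Y_k^(d) for 2 <= k <= m+1, with access only to the allowed challenges.\<close>

definition alice_msg ::
  "nat \<Rightarrow> ('r \<Rightarrow> 'f \<Rightarrow> 'f) \<Rightarrow> (nat \<Rightarrow> 'r \<Rightarrow> (nat \<Rightarrow> 'f) \<Rightarrow> bool \<Rightarrow> 'f)
     \<Rightarrow> 'r \<Rightarrow> (nat \<Rightarrow> 'f) \<Rightarrow> bool \<Rightarrow> nat \<Rightarrow> 'f" where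
  "alice_msg m f1 f r b d k =
     (if k = 1 then f1 r (b 1)
      else if k \<le> m then f k r (restrict b ({1..k-2} \<union> {k})) d
      else f (m+1) r (restrict b {1..m-1}) d)"

definition bit_mult :: "bool \<Rightarrow> 'f::field \<Rightarrow> 'f" where
  "bit_mult d x = (if d then x else 0)"

definition accept_event ::
  "nat \<Rightarrow> ('r \<Rightarrow> 'f \<Rightarrow> 'f) \<Rightarrow> (nat \<Rightarrow> 'r \<Rightarrow> (nat \<Rightarrow> 'f) \<Rightarrow> bool \<Rightarrow> 'f)
     \<Rightarrow> bool \<Rightarrow> ('r \<times> (nat \<Rightarrow> 'f::field)) set" where
  "accept_event m f1 f d =
     {(r, b). alice_msg m f1 f r b d (m+1) =
        (\<Sum>j\<in>{1..m}. (\<Prod>i\<in>{j+1..m}. b i) * alice_msg m f1 f r b d j)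
        + bit_mult d (\<Prod>i\<in>{1..m}. b i)}"

definition cheat_prob ::
  "nat \<Rightarrow> 'r pmf \<Rightarrow> ('r \<Rightarrow> 'f::{field,finite} \<Rightarrow> 'f) \<Rightarrow> (nat \<Rightarrow> 'r \<Rightarrow> (nat \<Rightarrow> 'f) \<Rightarrow> bool \<Rightarrow> 'f)
     \<Rightarrow> bool \<Rightarrow> real" where
  "cheat_prob m R f1 f d =
     measure_pmf.prob (pair_pmf R (pmf_of_set (PiE {1..m} (\<lambda>_. (UNIV :: 'f set)))))
       (accept_event m f1 f d)"

end

theory Submission
  imports Defs
begin

lemma win_le_value:
  fixes g :: "nat \<Rightarrow> (nat \<Rightarrow> 'f::{field,finite}) \<Rightarrow> 'f"
  shows "mult_game_win_prob r g \<le> mult_game_value TYPE('f::{field,finite}) r"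
proof -
  have le1: "mult_game_win_prob r h \<le> 1" for h :: "nat \<Rightarrow> (nat \<Rightarrow> 'f) \<Rightarrow> 'f"
  proof -
    have fin: "finite (mult_game_inputs r :: (nat \<Rightarrow> 'f) set)"
      unfolding mult_game_inputs_def by (simp add: finite_PiE)
    have "card {x \<in> mult_game_inputs r. (\<Prod>k\<in>{1..r}. x k) = (\<Sum>k\<in>{1..r}. h k (x(k := 0)))}
          \<le> card (mult_game_inputs r :: (nat \<Rightarrow> 'f) set)"
      by (rule card_mono[OF fin]) auto
    then show ?thesis unfolding mult_game_win_prob_def
      by (cases "card (mult_game_inputs r :: (nat \<Rightarrow> 'f) set) = 0") (auto simp: divide_le_eq_1)
  qed
  have bdd: "bdd_above (range (mult_game_win_prob r :: (nat \<Rightarrow> (nat \<Rightarrow> 'f) \<Rightarrow> 'f) \<Rightarrow> real))"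
    by (auto intro!: bdd_aboveI[of _ 1] le1)
  show ?thesis unfolding mult_game_value_def
    using cSUP_upper[OF UNIV_I bdd, of g] by simp
qed

lemma sum_split1:
  fixes h :: "nat \<Rightarrow> 'a::comm_monoid_add"
  shows "(\<Sum>j\<in>{1..Suc m'}. h j) = h 1 + (\<Sum>k\<in>{1..m'}. h (Suc k))"
proof -
  have "(\<Sum>j\<in>{1..Suc m'}. h j) = h 1 + (\<Sum>j\<in>{Suc 1..Suc m'}. h j)"
    by (rule sum.atLeast_Suc_atMost) simp
  also have "(\<Sum>j\<in>{Suc 1..Suc m'}. h j) = (\<Sum>k\<in>{1..m'}. h (Suc k))"
    by (rule sum.shift_bounds_cl_Suc_ivl)
  finally show ?thesis .
qed

lemma fixed_r:
  fixes f1 :: "'r \<Rightarrow> 'f::{field,finite} \<Rightarrow> 'f"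
    and f :: "nat \<Rightarrow> 'r \<Rightarrow> (nat \<Rightarrow> 'f) \<Rightarrow> bool \<Rightarrow> 'f"
  assumes "m \<ge> 1"
  shows "real (card {b \<in> PiE {1..m} (\<lambda>_. (UNIV::'f set)).
            (r,b) \<in> accept_event m f1 f False \<and> (r,b) \<in> accept_event m f1 f True})
          / real (card (PiE {1..m} (\<lambda>_. (UNIV::'f set)))) \<le> mult_game_value TYPE('f) m"
proof -
  obtain m' where m: "m = Suc m'" using assms by (cases m) auto
  define Y where "Y = (\<lambda>d j b. alice_msg m f1 f r b d j)"
  define D where "D = (\<lambda>j b. Y True j b - Y False j b)"
  define g :: "nat \<Rightarrow> (nat \<Rightarrow> 'f) \<Rightarrow> 'f" where
    "g = (\<lambda>k x. if k = m then D (m+1) x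
               else - ((\<Prod>i\<in>{k+2..m}. x i) * D (k+1) x))"
  let ?B = "PiE {1..m} (\<lambda>_. (UNIV::'f set))"
  have gm: "g m (x(m:=0)) = D (m+1) x" for x
  proof -
    have "restrict (x(m:=0)) {1..m-1} = restrict x {1..m-1}"
      using assms by (auto simp: restrict_def fun_eq_iff)
    then show ?thesis unfolding g_def D_def Y_def alice_msg_def by simp
  qed
  have gk: "g k (x(k:=0)) = - ((\<Prod>i\<in>{k+2..m}. x i) * D (k+1) x)"
    if "1 \<le> k" "k < m" for k x
  proof -
    have r: "restrict (x(k:=0)) ({1..k+1-2} \<union> {k+1}) = restrict x ({1..k+1-2} \<union> {k+1})"
      using that by (auto simp: restrict_def fun_eq_iff)
    have p: "(\<Prod>i\<in>{k+2..m}. (x(k:=0)) i) = (\<Prod>i\<in>{k+2..m}. x i)"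
      by (rule prod.cong) auto
    show ?thesis using that unfolding g_def D_def Y_def alice_msg_def
      using r p by simp
  qed
  have sub: "{b \<in> ?B. (r,b) \<in> accept_event m f1 f False \<and> (r,b) \<in> accept_event m f1 f True}
     \<subseteq> {x \<in> mult_game_inputs m. (\<Prod>k\<in>{1..m}. x k) = (\<Sum>k\<in>{1..m}. g k (x(k := 0)))}"
  proof (rule subsetI)
    fix b assume "b \<in> {b \<in> ?B. (r,b) \<in> accept_event m f1 f False \<and> (r,b) \<in> accept_event m f1 f True}"
    then have bB: "b \<in> ?B" and H0: "(r,b) \<in> accept_event m f1 f False"
      and H1: "(r,b) \<in> accept_event m f1 f True" by auto
    define c where "c = (\<lambda>j. \<Prod>i\<in>{j+1..m}. b i)"
    have split: "(\<Sum>j\<in>{1..m}. c j * Y d j b) = c 1 * Y d 1 b + (\<Sum>k\<in>{1..m'}. c (Suc k) * Y d (Suc k) b)" for d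
      unfolding m by (rule sum_split1)
    have e0: "Y False (m+1) b = c 1 * Y False 1 b + (\<Sum>k\<in>{1..m'}. c (Suc k) * Y False (Suc k) b)"
      using H0 split[of False] unfolding accept_event_def Y_def c_def bit_mult_def by simp
    have e1: "Y True (m+1) b = c 1 * Y True 1 b + (\<Sum>k\<in>{1..m'}. c (Suc k) * Y True (Suc k) b)
              + (\<Prod>i\<in>{1..m}. b i)"
      using H1 split[of True] unfolding accept_event_def Y_def c_def bit_mult_def by simp
    have y1: "Y True 1 b = Y False 1 b" unfolding Y_def alice_msg_def by simp
    have prodeq: "(\<Prod>i\<in>{1..m}. b i) = D (m+1) b - (\<Sum>k\<in>{1..m'}. c (Suc k) * D (Suc k) b)"
      using e0 e1 y1 unfolding D_def
      by (simp add: algebra_simps sum_subtractf[symmetric])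
    have "(\<Sum>k\<in>{1..m}. g k (b(k := 0))) = (\<Sum>k\<in>{1..m'}. g k (b(k := 0))) + g m (b(m:=0))"
      unfolding m by simp
    also have "(\<Sum>k\<in>{1..m'}. g k (b(k := 0))) = (\<Sum>k\<in>{1..m'}. - (c (Suc k) * D (Suc k) b))"
      by (rule sum.cong) (auto simp: gk m c_def)
    also have "(\<Sum>k\<in>{1..m'}. - (c (Suc k) * D (Suc k) b)) + g m (b(m:=0))
        = D (m+1) b - (\<Sum>k\<in>{1..m'}. c (Suc k) * D (Suc k) b)"
      unfolding gm by (simp add: sum_negf)
    finally have X: "(\<Sum>k\<in>{1..m}. g k (b(k := 0))) = D (m+1) b - (\<Sum>k\<in>{1..m'}. c (Suc k) * D (Suc k) b)" .
    have "(\<Sum>k\<in>{1..m}. g k (b(k := 0))) = (\<Prod>i\<in>{1..m}. b i)"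
      using X prodeq[symmetric] by (rule trans)
    then show "b \<in> {x \<in> mult_game_inputs m. (\<Prod>k\<in>{1..m}. x k) = (\<Sum>k\<in>{1..m}. g k (x(k := 0)))}"
      using bB unfolding mult_game_inputs_def by simp
  qed
  have fin: "finite (mult_game_inputs m :: (nat \<Rightarrow> 'f) set)"
    unfolding mult_game_inputs_def by (simp add: finite_PiE)
  let ?W = "{x \<in> mult_game_inputs m. (\<Prod>k\<in>{1..m}. x k) = (\<Sum>k\<in>{1..m}. g k (x(k := 0)))}"
  have finW: "finite ?W" using fin by simp
  have cm: "card {b \<in> ?B. (r,b) \<in> accept_event m f1 f False \<and> (r,b) \<in> accept_event m f1 f True} \<le> card ?W"
    by (rule card_mono[OF finW sub])
  have eqB: "mult_game_inputs m = ?B" unfolding mult_game_inputs_def by simp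
  have "real (card {b \<in> ?B. (r,b) \<in> accept_event m f1 f False \<and> (r,b) \<in> accept_event m f1 f True})
          / real (card ?B) \<le> real (card ?W) / real (card ?B)"
    by (rule divide_right_mono) (use cm in simp_all)
  also have "\<dots> = mult_game_win_prob m g"
    unfolding mult_game_win_prob_def eqB ..
  also have "\<dots> \<le> mult_game_value TYPE('f) m" by (rule win_le_value)
  finally show ?thesis .
qed

lemma prob_sum:
  fixes R :: "'r pmf" and B :: "'b set"
  assumes fR: "finite (set_pmf R)" and fB: "finite B" and nB: "B \<noteq> {}"
  shows "measure_pmf.prob (pair_pmf R (pmf_of_set B)) S
       = (\<Sum>r\<in>set_pmf R. pmf R r * (real (card {b\<in>B. (r,b)\<in>S}) / real (card B)))"
proof -
  let ?P = "pair_pmf R (pmf_of_set B)"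
  have sP: "set_pmf ?P = set_pmf R \<times> B" using fB nB by simp
  have "measure_pmf.prob ?P S = measure_pmf.prob ?P (S \<inter> set_pmf ?P)"
    by (rule measure_Int_set_pmf[symmetric])
  also have "\<dots> = sum (pmf ?P) (S \<inter> set_pmf ?P)"
    by (rule measure_measure_pmf_finite) (use fR fB sP in auto)
  also have "S \<inter> set_pmf ?P = Sigma (set_pmf R) (\<lambda>r. {b\<in>B. (r,b)\<in>S})"
    using sP by auto
  also have "sum (pmf ?P) (Sigma (set_pmf R) (\<lambda>r. {b\<in>B. (r,b)\<in>S}))
      = (\<Sum>r\<in>set_pmf R. \<Sum>b\<in>{b\<in>B. (r,b)\<in>S}. pmf ?P (r,b))"
    by (subst sum.Sigma) (use fR fB in \<open>auto simp: split_def\<close>)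
  also have "\<dots> = (\<Sum>r\<in>set_pmf R. pmf R r * (real (card {b\<in>B. (r,b)\<in>S}) / real (card B)))"
  proof (rule sum.cong[OF refl])
    fix r
    have "(\<Sum>b\<in>{b\<in>B. (r,b)\<in>S}. pmf ?P (r,b)) = (\<Sum>b\<in>{b\<in>B. (r,b)\<in>S}. pmf R r / real (card B))"
      by (rule sum.cong) (use fB nB in \<open>auto simp: pmf_pair\<close>)
    then show "(\<Sum>b\<in>{b\<in>B. (r,b)\<in>S}. pmf ?P (r,b)) = pmf R r * (real (card {b\<in>B. (r,b)\<in>S}) / real (card B))"
      by simp
  qed
  finally show ?thesis .
qed

theorem propositionC2:
  fixes n m :: nat
    and R :: "'r pmf"
    and f1 :: "'r \<Rightarrow> 'f::{field,finite} \<Rightarrow> 'f"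
    and f :: "nat \<Rightarrow> 'r \<Rightarrow> (nat \<Rightarrow> 'f) \<Rightarrow> bool \<Rightarrow> 'f"
  assumes "n \<ge> 1" and "m \<ge> 1"
    and "CARD('f) = 2 ^ n"
    and "finite (set_pmf R)"
  shows "cheat_prob m R f1 f False + cheat_prob m R f1 f True
           \<le> 1 + mult_game_value TYPE('f) m"
proof -
  let ?B = "PiE {1..m} (\<lambda>_. (UNIV::'f set))"
  let ?w = "mult_game_value TYPE('f) m"
  have fB: "finite ?B" by (simp add: finite_PiE)
  have nB: "?B \<noteq> {}" by (simp add: PiE_eq_empty_iff)
  have cB: "card ?B > 0" using fB nB by (simp add: card_gt_0_iff)
  define c where "c = (\<lambda>d r. real (card {b\<in>?B. (r,b)\<in>accept_event m f1 f d}))"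
  have p: "cheat_prob m R f1 f d = (\<Sum>r\<in>set_pmf R. pmf R r * (c d r / real (card ?B)))" for d
    unfolding cheat_prob_def c_def by (rule prob_sum[OF assms(4) fB nB])
  have pt: "c False r / real (card ?B) + c True r / real (card ?B) \<le> 1 + ?w" for r
  proof -
    let ?A = "\<lambda>d. {b\<in>?B. (r,b)\<in>accept_event m f1 f d}"
    have I: "?A False \<inter> ?A True = {b\<in>?B. (r,b)\<in>accept_event m f1 f False \<and> (r,b)\<in>accept_event m f1 f True}"
      by blast
    have E: "card (?A False) + card (?A True) = card (?A False \<union> ?A True) + card (?A False \<inter> ?A True)"
      by (rule card_Un_Int) (rule finite_subset[OF _ fB], blast)+
    have U: "card (?A False \<union> ?A True) \<le> card ?B" by (rule card_mono[OF fB]) blast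
    have N: "card (?A False) + card (?A True) \<le> card ?B + card {b\<in>?B. (r,b)\<in>accept_event m f1 f False \<and> (r,b)\<in>accept_event m f1 f True}"
      using E U unfolding I by linarith
    let ?z = "card {b\<in>?B. (r,b)\<in>accept_event m f1 f False \<and> (r,b)\<in>accept_event m f1 f True}"
    have N': "real (card (?A False) + card (?A True)) \<le> real (card ?B + ?z)"
      using N by (rule of_nat_mono)
    have C: "c False r + c True r \<le> real (card ?B) + real ?z"
      using N' unfolding c_def of_nat_add .
    have "(c False r + c True r) / real (card ?B) \<le> (real (card ?B) + real ?z) / real (card ?B)"
      by (rule divide_right_mono[OF C]) simp
    also have "(real (card ?B) + real ?z) / real (card ?B) = 1 + real ?z / real (card ?B)"
      using cB by (simp add: add_divide_distrib)
    finally have "(c False r + c True r) / real (card ?B) \<le> 1 + real ?z / real (card ?B)" .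
    also have "\<dots> \<le> 1 + ?w" using fixed_r[OF assms(2), of r f1 f] by (rule add_left_mono)
    finally show ?thesis by (simp add: add_divide_distrib)
  qed
  have "cheat_prob m R f1 f False + cheat_prob m R f1 f True
      = (\<Sum>r\<in>set_pmf R. pmf R r * (c False r / real (card ?B) + c True r / real (card ?B)))"
    unfolding p by (simp add: sum.distrib[symmetric] distrib_left)
  also have "\<dots> \<le> (\<Sum>r\<in>set_pmf R. pmf R r * (1 + ?w))"
    by (rule sum_mono, rule mult_left_mono[OF pt]) simp
  also have "\<dots> = 1 + ?w"
    by (simp add: sum_distrib_right[symmetric] sum_pmf_eq_1 assms(4))
  finally show ?thesis .
qed

end
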